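(* For every integer $n\ge6$, $B(n)\ge 2^{\lceil n/2\rceil}$.
   Context: Fix a field $\mathbb{F}$. All algebras are finite-dimensional, unital, not necessarily associative $\mathbb{F}$-algebras. For a finite generating set $S$ of an algebra $\mathcal{A}$, a word in $S$ is any product (with any bracketing) of finitely many elements of $S$; its length is the number of factors, and $1$ is a word of length $0$. $L_i(S)$ is the linear span of all words in $S$ of length at most $i$. The length of $S$ is $l(S)=\min\{k\ge0: L_k(S)=\mathcal{A}\}$, and $l(\mathcal{A})=\max\{l(S): S\text{ a finite generating set of }\mathcal{A}\}$. For a natural number $n\ge2$, $B(n)$ denotes the maximal integer $l>0$ such that for every $j\in\{1,\ldots,l\}$ there exists an algebra of dimension $n$ and length $j$. *)

theory Defs
  imports Complex_Main
begin

text \<open>An n-dimensional (not necessarily associative) algebra over a field 'a is modelled,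
  up to isomorphism, as F^n = vectors nat => 'a supported on {0..<n}, with a bilinear
  multiplication given by structure constants c i j k, i.e. e_i * e_j = sum_k c i j k e_k.\<close>

definition vecs :: "nat \<Rightarrow> (nat \<Rightarrow> 'a::field) set" where
  "vecs n = {v. \<forall>i\<ge>n. v i = 0}"

definition amult :: "nat \<Rightarrow> (nat \<Rightarrow> nat \<Rightarrow> nat \<Rightarrow> 'a::field)
    \<Rightarrow> (nat \<Rightarrow> 'a) \<Rightarrow> (nat \<Rightarrow> 'a) \<Rightarrow> (nat \<Rightarrow> 'a)" where
  "amult n c x y = (\<lambda>k. if k < n then (\<Sum>i<n. \<Sum>j<n. x i * y j * c i j k) else 0)"

definition is_unital_alg :: "nat \<Rightarrow> (nat \<Rightarrow> nat \<Rightarrow> nat \<Rightarrow> 'a::field) \<Rightarrow> (nat \<Rightarrow> 'a) \<Rightarrow> bool" where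
  "is_unital_alg n c e \<longleftrightarrow> e \<in> vecs n \<and>
     (\<forall>x\<in>vecs n. amult n c e x = x \<and> amult n c x e = x)"

inductive_set words :: "nat \<Rightarrow> (nat \<Rightarrow> nat \<Rightarrow> nat \<Rightarrow> 'a::field) \<Rightarrow> (nat \<Rightarrow> 'a)
    \<Rightarrow> (nat \<Rightarrow> 'a) set \<Rightarrow> ((nat \<Rightarrow> 'a) \<times> nat) set"
  for n c e S where
  unit_word: "(e, 0) \<in> words n c e S"
| gen_word: "s \<in> S \<Longrightarrow> (s, 1) \<in> words n c e S"
| mult_word: "(u, i) \<in> words n c e S \<Longrightarrow> (w, j) \<in> words n c e S
      \<Longrightarrow> (amult n c u w, i + j) \<in> words n c e S"

definition lin_span :: "(nat \<Rightarrow> 'a::field) set \<Rightarrow> (nat \<Rightarrow> 'a) set" where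
  "lin_span W = {v. \<exists>T f. finite T \<and> T \<subseteq> W \<and> v = (\<lambda>k. \<Sum>w\<in>T. f w * w k)}"

definition Lspan :: "nat \<Rightarrow> (nat \<Rightarrow> nat \<Rightarrow> nat \<Rightarrow> 'a::field) \<Rightarrow> (nat \<Rightarrow> 'a)
    \<Rightarrow> (nat \<Rightarrow> 'a) set \<Rightarrow> nat \<Rightarrow> (nat \<Rightarrow> 'a) set" where
  "Lspan n c e S i = lin_span {w. \<exists>k\<le>i. (w, k) \<in> words n c e S}"

definition generating_set :: "nat \<Rightarrow> (nat \<Rightarrow> nat \<Rightarrow> nat \<Rightarrow> 'a::field) \<Rightarrow> (nat \<Rightarrow> 'a)
    \<Rightarrow> (nat \<Rightarrow> 'a) set \<Rightarrow> bool" where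
  "generating_set n c e S \<longleftrightarrow> finite S \<and> S \<subseteq> vecs n \<and> (\<exists>k. Lspan n c e S k = vecs n)"

definition set_length :: "nat \<Rightarrow> (nat \<Rightarrow> nat \<Rightarrow> nat \<Rightarrow> 'a::field) \<Rightarrow> (nat \<Rightarrow> 'a)
    \<Rightarrow> (nat \<Rightarrow> 'a) set \<Rightarrow> nat" where
  "set_length n c e S = (LEAST k. Lspan n c e S k = vecs n)"

definition alg_length :: "nat \<Rightarrow> (nat \<Rightarrow> nat \<Rightarrow> nat \<Rightarrow> 'a::field) \<Rightarrow> (nat \<Rightarrow> 'a) \<Rightarrow> nat" where
  "alg_length n c e = Max {set_length n c e S | S. generating_set n c e S}"

definition has_alg_of_dim_length :: "'a::field itself \<Rightarrow> nat \<Rightarrow> nat \<Rightarrow> bool" where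
  "has_alg_of_dim_length (_ :: 'a itself) n j \<longleftrightarrow>
     (\<exists>(c :: nat \<Rightarrow> nat \<Rightarrow> nat \<Rightarrow> 'a) e. is_unital_alg n c e \<and> alg_length n c e = j)"

end

theory Submission
  imports Defs
begin


definition sg :: "(nat \<Rightarrow> nat) \<Rightarrow> nat \<Rightarrow> nat" where "sg s t = min t (s t)"

lemma sg_le: "sg s t \<le> t" by (simp add: sg_def)

function ell :: "(nat \<Rightarrow> nat) \<Rightarrow> nat \<Rightarrow> nat" where
  "ell s 0 = 1"
| "ell s (Suc t) = ell s t + ell s (sg s t)"
  by pat_completeness auto
termination by (relation "measure snd") (auto simp: sg_def)

lemma ell_pos: "ell s t \<ge> 1"
  by (induction t) auto

lemma ell_Suc_ge: "ell s t \<le> ell s (Suc t)" by simp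

lemma ell_mono: "t \<le> t' \<Longrightarrow> ell s t \<le> ell s t'"
  by (rule lift_Suc_mono_le[of "ell s"]) auto

lemma ell_strict: "t < t' \<Longrightarrow> ell s t < ell s t'"
proof (rule lift_Suc_mono_less[of "ell s"])
  fix m show "ell s m < ell s (Suc m)" using ell_pos[of s "sg s m"] by simp
qed

lemma ell_cong: "(\<And>t'. t' < t \<Longrightarrow> s t' = s' t') \<Longrightarrow> ell s t = ell s' t"
proof (induction t rule: less_induct)
  case (less t)
  show ?case
  proof (cases t)
    case 0 then show ?thesis by simp
  next
    case (Suc u)
    have su: "sg s u = sg s' u" using less.prems Suc by (simp add: sg_def)
    have le: "sg s u \<le> u" by (rule sg_le)
    have "ell s u = ell s' u" by (rule less.IH) (use less.prems Suc in auto)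
    moreover have "ell s (sg s u) = ell s' (sg s u)" by (rule less.IH) (use less.prems Suc le in auto)
    ultimately show ?thesis using Suc su by simp
  qed
qed

lemma ell_upd: assumes "i \<le> k" shows "ell (s(k := i)) (Suc k) = ell s k + ell s i"
proof -
  have "sg (s(k := i)) k = i" using assms by (simp add: sg_def)
  moreover have "ell (s(k := i)) k = ell s k" by (rule ell_cong) auto
  moreover have "ell (s(k := i)) i = ell s i" by (rule ell_cong) (use assms in auto)
  ultimately show ?thesis by simp
qed

definition ach :: "nat \<Rightarrow> nat \<Rightarrow> bool" where
  "ach j K \<longleftrightarrow> (\<exists>s k. k \<le> K \<and> ell s k = j)"

lemma ach1: "ach 1 0" unfolding ach_def by auto

lemma ach_double: "ach j K \<Longrightarrow> ach (2 * j) (K + 1)"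
  unfolding ach_def
proof (elim exE conjE)
  fix s k assume "k \<le> K" "ell s k = j"
  then show "\<exists>s k. k \<le> K + 1 \<and> ell s k = 2 * j"
    by (intro exI[of _ "s(k := k)"] exI[of _ "Suc k"]) (use ell_upd[of k k s] in \<open>simp del: ell.simps(2)\<close>)
qed

lemma ach_inc: "ach j K \<Longrightarrow> ach (j + 1) (K + 1)"
  unfolding ach_def
proof (elim exE conjE)
  fix s k assume "k \<le> K" "ell s k = j"
  then show "\<exists>s k. k \<le> K + 1 \<and> ell s k = j + 1"
    by (intro exI[of _ "s(k := 0)"] exI[of _ "Suc k"]) (use ell_upd[of 0 k s] in \<open>simp del: ell.simps(2)\<close>)
qed

lemma ach_mono: "ach j K \<Longrightarrow> K \<le> K' \<Longrightarrow> ach j K'"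
  unfolding ach_def by (blast intro: order_trans)

lemma ach15: "ach 15 5"
proof -
  define s :: "nat \<Rightarrow> nat" where "s = (\<lambda>t. if t = 2 \<or> t = 4 then 2 else if t = 3 then 3 else 0)"
  have "ell s 5 = 15" by (simp add: s_def sg_def eval_nat_numeral)
  then show ?thesis unfolding ach_def by blast
qed

lemma base8: assumes "1 \<le> j" "j \<le> 8" "j \<noteq> 7" shows "ach j 3"
proof -
  have a2: "ach 2 1" using ach_double[OF ach1] by simp
  have a3: "ach 3 2" using ach_inc[OF a2] by (simp add: eval_nat_numeral)
  have a4: "ach 4 2" using ach_double[OF a2] by (simp add: eval_nat_numeral)
  have a5: "ach 5 3" using ach_inc[OF a4] by (simp add: eval_nat_numeral)
  have a6: "ach 6 3" using ach_double[OF a3] by (simp add: eval_nat_numeral)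
  have a8: "ach 8 3" using ach_double[OF a4] by (simp add: eval_nat_numeral)
  have "j = 1 \<or> j = 2 \<or> j = 3 \<or> j = 4 \<or> j = 5 \<or> j = 6 \<or> j = 8" using assms by auto
  then show ?thesis using ach_mono[OF ach1] ach_mono[OF a2] ach_mono[OF a3] ach_mono[OF a4] a5 a6 a8
    by auto
qed

lemma ach7: "ach 7 4"
proof -
  have "ach 6 3" using base8[of 6] by simp
  then show ?thesis using ach_inc by fastforce
qed

lemma Q8: assumes "1 \<le> j" "j \<le> 8" shows "ach j 4"
  using base8[OF assms] ach7 ach_mono by (cases "j = 7") auto

lemma Q16: assumes "1 \<le> j" "j \<le> 16" shows "ach j 5"
proof (cases "even j")
  case True
  then obtain j' where j: "j = 2 * j'" by auto
  show ?thesis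
  proof (cases "j' = 7")
    case True then show ?thesis using ach_double[OF ach7] j by simp
  next
    case False
    then have "ach j' 3" using base8[of j'] assms j by auto
    then show ?thesis using ach_double ach_mono j by fastforce
  qed
next
  case False
  then obtain j' where j: "j = 2 * j' + 1" using oddE by blast
  show ?thesis
  proof (cases "j' = 0")
    case True then show ?thesis using ach_mono[OF ach1] j by simp
  next
    case nz: False
    show ?thesis
    proof (cases "j' = 7")
      case True then show ?thesis using ach15 j by simp
    next
      case False
      then have "ach j' 3" using base8[of j'] assms j nz by auto
      then show ?thesis using ach_inc[OF ach_double[OF \<open>ach j' 3\<close>]] j by simp
    qed
  qed
qed

lemma Qstep: assumes "\<forall>j. 1 \<le> j \<and> j \<le> 2 ^ m \<longrightarrow> ach j b"
  shows "\<forall>j. 1 \<le> j \<and> j \<le> 2 ^ Suc m \<longrightarrow> ach j (b + 2)"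
proof (intro allI impI)
  fix j :: nat assume j: "1 \<le> j \<and> j \<le> 2 ^ Suc m"
  show "ach j (b + 2)"
  proof (cases "even j")
    case True
    then obtain j' where jj: "j = 2 * j'" by auto
    then have "ach j' b" using assms j by auto
    then show ?thesis using ach_double ach_mono jj by fastforce
  next
    case False
    then obtain j' where jj: "j = 2 * j' + 1" using oddE by blast
    show ?thesis
    proof (cases "j' = 0")
      case True then show ?thesis using ach_mono[OF ach1] jj by simp
    next
      case False
      have "j' \<le> 2 ^ m" using j jj by simp
      then have "ach j' b" using assms False by auto
      then show ?thesis using ach_inc[OF ach_double[OF \<open>ach j' b\<close>]] jj by simp
    qed
  qed
qed

lemma Qeven: "\<forall>j. 1 \<le> j \<and> j \<le> 2 ^ (d + 3) \<longrightarrow> ach j (2 * d + 4)"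
proof (induction d)
  case 0 then show ?case using Q8 by simp
next
  case (Suc d) then show ?case using Qstep[OF Suc] by simp
qed

lemma Qodd: "\<forall>j. 1 \<le> j \<and> j \<le> 2 ^ (d + 4) \<longrightarrow> ach j (2 * d + 5)"
proof (induction d)
  case 0 then show ?case using Q16 by simp
next
  case (Suc d) then show ?case using Qstep[OF Suc] by simp
qed

lemma ceil_half: "nat \<lceil>real n / 2\<rceil> = (n + 1) div 2"
proof (cases "even n")
  case True
  then obtain q where "n = 2 * q" by auto
  then show ?thesis by simp
next
  case False
  then obtain q where q: "n = 2 * q + 1" using oddE by blast
  have "\<lceil>real n / 2\<rceil> = int q + 1"
    unfolding q by (subst ceiling_eq_iff) auto
  then show ?thesis using q by simp
qed

lemma ach_all: fixes j :: nat assumes "n \<ge> 6" "1 \<le> j" "j \<le> 2 ^ nat \<lceil>real n / 2\<rceil>"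
  shows "ach j (n - 2)"
proof (cases "even n")
  case True
  then obtain q where q: "n = 2 * q" by auto
  define d where "d = q - 3"
  have d: "n = 2 * d + 6" unfolding d_def using q assms(1) by arith
  have "nat \<lceil>real n / 2\<rceil> = d + 3" using ceil_half[of n] d by simp
  moreover have "n - 2 = 2 * d + 4" using d by simp
  ultimately show ?thesis using Qeven[of d] assms by simp
next
  case False
  then obtain q where q: "n = 2 * q + 1" using oddE by blast
  define d where "d = q - 3"
  have d: "n = 2 * d + 7" unfolding d_def using q assms(1) by arith
  have "nat \<lceil>real n / 2\<rceil> = d + 4" using ceil_half[of n] d by simp
  moreover have "n - 2 = 2 * d + 5" using d by simp
  ultimately show ?thesis using Qodd[of d] assms by simp
qed



lemma lin_span_base: "w \<in> W \<Longrightarrow> w \<in> lin_span W"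
  unfolding lin_span_def
  by (rule CollectI, rule exI[of _ "{w}"], rule exI[of _ "\<lambda>_. 1"]) auto

lemma lin_span_zero: "(\<lambda>_. 0) \<in> lin_span W"
  unfolding lin_span_def
  by (rule CollectI, rule exI[of _ "{}"], rule exI[of _ "\<lambda>_. 1"]) auto

lemma lin_span_scale: "x \<in> lin_span W \<Longrightarrow> (\<lambda>k. a * x k) \<in> lin_span W"
  unfolding lin_span_def
proof (elim CollectE exE conjE, rule CollectI)
  fix T f assume T: "finite T" "T \<subseteq> W" "x = (\<lambda>k. \<Sum>w\<in>T. f w * w k)"
  show "\<exists>T f. finite T \<and> T \<subseteq> W \<and> (\<lambda>k. a * x k) = (\<lambda>k. \<Sum>w\<in>T. f w * w k)"
    by (rule exI[of _ T], rule exI[of _ "\<lambda>w. a * f w"]) (use T in \<open>auto simp: sum_distrib_left mult.assoc\<close>)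
qed

lemma lin_span_add: "x \<in> lin_span W \<Longrightarrow> y \<in> lin_span W \<Longrightarrow> (\<lambda>k. x k + y k) \<in> lin_span W"
  unfolding lin_span_def
proof (elim CollectE exE conjE, rule CollectI)
  fix T1 f1 T2 f2 assume T1: "finite T1" "T1 \<subseteq> W" "x = (\<lambda>k. \<Sum>w\<in>T1. f1 w * w k)"
    and T2: "finite T2" "T2 \<subseteq> W" "y = (\<lambda>k. \<Sum>w\<in>T2. f2 w * w k)"
  define f where "f = (\<lambda>w. (if w \<in> T1 then f1 w else 0) + (if w \<in> T2 then f2 w else 0))"
  have "(\<lambda>k. x k + y k) = (\<lambda>k. \<Sum>w\<in>T1 \<union> T2. f w * w k)"
  proof
    fix k
    have "(\<Sum>w\<in>T1 \<union> T2. f w * w k) = (\<Sum>w\<in>T1 \<union> T2. (if w \<in> T1 then f1 w * w k else 0)) + (\<Sum>w\<in>T1 \<union> T2. (if w \<in> T2 then f2 w * w k else 0))"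
      unfolding sum.distrib[symmetric] by (rule sum.cong) (auto simp: f_def distrib_right)
    also have "\<dots> = (\<Sum>w\<in>T1. f1 w * w k) + (\<Sum>w\<in>T2. f2 w * w k)"
      using T1(1) T2(1) sum.inter_restrict[of "T1 \<union> T2" "\<lambda>w. f1 w * w k" T1, symmetric]
        sum.inter_restrict[of "T1 \<union> T2" "\<lambda>w. f2 w * w k" T2, symmetric]
      by (simp add: Int_absorb1 Int_absorb2)
    finally show "x k + y k = (\<Sum>w\<in>T1 \<union> T2. f w * w k)" using T1(3) T2(3) by simp
  qed
  then show "\<exists>T f. finite T \<and> T \<subseteq> W \<and> (\<lambda>k. x k + y k) = (\<lambda>k. \<Sum>w\<in>T. f w * w k)"
    using T1 T2 by blast
qed

lemma lin_span_min:
  assumes "P (\<lambda>_. 0)" "\<And>x y. P x \<Longrightarrow> P y \<Longrightarrow> P (\<lambda>k. x k + y k)"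
    "\<And>a x. P x \<Longrightarrow> P (\<lambda>k. a * x k)" "\<And>w. w \<in> W \<Longrightarrow> P w"
    and "v \<in> lin_span W"
  shows "P v"
proof -
  obtain T f where T: "finite T" "T \<subseteq> W" "v = (\<lambda>k. \<Sum>w\<in>T. f w * w k)"
    using assms(5) unfolding lin_span_def by blast
  have "P (\<lambda>k. \<Sum>w\<in>T. f w * w k)" using T(1,2)
  proof (induction T rule: finite_induct)
    case empty then show ?case using assms(1) by simp
  next
    case (insert w T)
    have "P (\<lambda>k. f w * w k)" using assms(3,4) insert by auto
    moreover have "P (\<lambda>k. \<Sum>w\<in>T. f w * w k)" using insert by auto
    ultimately have "P (\<lambda>k. f w * w k + (\<Sum>w\<in>T. f w * w k))" using assms(2) by blast
    then show ?case using insert by simp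
  qed
  then show ?thesis using T by simp
qed

lemma lin_span_mono: "W \<subseteq> W' \<Longrightarrow> lin_span W \<subseteq> lin_span W'"
  unfolding lin_span_def by blast

lemma lin_span_sum:
  assumes "finite R" "\<And>r. r \<in> R \<Longrightarrow> g r \<in> lin_span W"
  shows "(\<lambda>i. \<Sum>r\<in>R. a r * g r i) \<in> lin_span W"
  using assms
proof (induction R rule: finite_induct)
  case empty then show ?case using lin_span_zero by simp
next
  case (insert r R)
  have "(\<lambda>i. a r * g r i + (\<Sum>r\<in>R. a r * g r i)) \<in> lin_span W"
    using insert by (intro lin_span_add lin_span_scale) auto
  then show ?case using insert by simp
qed

lemma lin_span_lc3:
  assumes "x \<in> lin_span W" "y \<in> lin_span W" "z \<in> lin_span W"
  shows "(\<lambda>k. a * x k + b * y k + d * z k) \<in> lin_span W"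
  using assms by (intro lin_span_add lin_span_scale)

lemma amult_add_left: "amult n c (\<lambda>k. x k + y k) z = (\<lambda>k. amult n c x z k + amult n c y z k)"
  by (auto simp: amult_def distrib_right sum.distrib)
lemma amult_add_right: "amult n c z (\<lambda>k. x k + y k) = (\<lambda>k. amult n c z x k + amult n c z y k)"
  by (auto simp: amult_def distrib_right distrib_left sum.distrib)
lemma amult_scale_left: "amult n c (\<lambda>k. a * x k) z = (\<lambda>k. a * amult n c x z k)"
  by (auto simp: amult_def sum_distrib_left ac_simps)
lemma amult_scale_right: "amult n c z (\<lambda>k. a * x k) = (\<lambda>k. a * amult n c z x k)"
  by (auto simp: amult_def sum_distrib_left ac_simps)
lemma amult_zero_left: "amult n c (\<lambda>_. 0) z = (\<lambda>_. 0)"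
  by (auto simp: amult_def)
lemma amult_zero_right: "amult n c z (\<lambda>_. 0) = (\<lambda>_. 0)"
  by (auto simp: amult_def)

lemma amult_span:
  assumes "x \<in> lin_span A" "y \<in> lin_span B"
  shows "amult n c x y \<in> lin_span {amult n c a b | a b. a \<in> A \<and> b \<in> B}"
proof -
  let ?AB = "{amult n c a b | a b. a \<in> A \<and> b \<in> B}"
  have r: "amult n c a y \<in> lin_span ?AB" if a: "a \<in> A" for a
  proof (rule lin_span_min[where P = "\<lambda>y. amult n c a y \<in> lin_span ?AB", OF _ _ _ _ assms(2)])
    show "amult n c a (\<lambda>_. 0) \<in> lin_span ?AB" by (simp add: amult_zero_right lin_span_zero)
    show "amult n c a (\<lambda>k. x k + y k) \<in> lin_span ?AB" if "amult n c a x \<in> lin_span ?AB" "amult n c a y \<in> lin_span ?AB" for x y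
      using that by (simp add: amult_add_right lin_span_add)
    show "amult n c a (\<lambda>k. b * x k) \<in> lin_span ?AB" if "amult n c a x \<in> lin_span ?AB" for b x
      using that by (simp add: amult_scale_right lin_span_scale)
    show "amult n c a w \<in> lin_span ?AB" if "w \<in> B" for w
      using that a by (intro lin_span_base) blast
  qed
  show ?thesis
  proof (rule lin_span_min[where P = "\<lambda>x. amult n c x y \<in> lin_span ?AB", OF _ _ _ _ assms(1)])
    show "amult n c (\<lambda>_. 0) y \<in> lin_span ?AB" by (simp add: amult_zero_left lin_span_zero)
    show "amult n c (\<lambda>k. x k + z k) y \<in> lin_span ?AB" if "amult n c x y \<in> lin_span ?AB" "amult n c z y \<in> lin_span ?AB" for x z
      using that by (simp add: amult_add_left lin_span_add)
    show "amult n c (\<lambda>k. b * x k) y \<in> lin_span ?AB" if "amult n c x y \<in> lin_span ?AB" for b x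
      using that by (simp add: amult_scale_left lin_span_scale)
    show "amult n c w y \<in> lin_span ?AB" if "w \<in> A" for w
      using r that by blast
  qed
qed

lemma word_Lspan: "(w, k) \<in> words n c e S \<Longrightarrow> k \<le> i \<Longrightarrow> w \<in> Lspan n c e S i"
  unfolding Lspan_def by (rule lin_span_base) blast

lemma Lspan_mono: "i \<le> j \<Longrightarrow> Lspan n c e S i \<subseteq> Lspan n c e S j"
  unfolding Lspan_def by (rule lin_span_mono) (blast intro: le_trans)

lemma Lspan_mult:
  assumes "x \<in> Lspan n c e S i" "y \<in> Lspan n c e S j"
  shows "amult n c x y \<in> Lspan n c e S (i + j)"
proof -
  have "amult n c x y \<in> lin_span {amult n c a b | a b. a \<in> {w. \<exists>k\<le>i. (w, k) \<in> words n c e S} \<and> b \<in> {w. \<exists>k\<le>j. (w, k) \<in> words n c e S}}"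
    using assms unfolding Lspan_def by (rule amult_span)
  also have "\<dots> \<subseteq> Lspan n c e S (i + j)"
    unfolding Lspan_def
  proof (rule lin_span_mono, safe)
    fix a b k1 k2 assume "k1 \<le> i" "(a, k1) \<in> words n c e S" "k2 \<le> j" "(b, k2) \<in> words n c e S"
    then show "\<exists>k\<le>i + j. (amult n c a b, k) \<in> words n c e S"
      by (intro exI[of _ "k1 + k2"]) (auto intro: words.mult_word)
  qed
  finally show ?thesis .
qed

lemma words_vecs: "(w, k) \<in> words n c e S \<Longrightarrow> e \<in> vecs n \<Longrightarrow> S \<subseteq> vecs n \<Longrightarrow> w \<in> vecs n"
  by (induction rule: words.induct) (auto simp: vecs_def amult_def)

lemma Lspan_vecs: "e \<in> vecs n \<Longrightarrow> S \<subseteq> vecs n \<Longrightarrow> Lspan n c e S i \<subseteq> vecs n"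
  unfolding Lspan_def
proof
  fix x assume e: "e \<in> vecs n" and S: "S \<subseteq> vecs n" and x: "x \<in> lin_span {w. \<exists>k\<le>i. (w, k) \<in> words n c e S}"
  show "x \<in> vecs n"
    by (rule lin_span_min[where P = "\<lambda>x. x \<in> vecs n", OF _ _ _ _ x])
      (use words_vecs[OF _ e S] in \<open>auto simp: vecs_def\<close>)
qed



definition bas :: "nat \<Rightarrow> nat \<Rightarrow> 'a::field" where "bas r = (\<lambda>i. if i = r then 1 else 0)"

definition cc :: "nat \<Rightarrow> (nat \<Rightarrow> nat) \<Rightarrow> nat \<Rightarrow> nat \<Rightarrow> nat \<Rightarrow> 'a::field" where
  "cc k s i j l = (if i = 0 \<and> j = l then 1 else 0) + (if j = 0 \<and> i = l \<and> i \<noteq> 0 then 1 else 0)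
     + (if 1 \<le> i \<and> i \<le> k \<and> j = sg s (i - 1) + 1 \<and> l = i + 1 then 1 else 0)"

lemma amult_cc:
  assumes kn: "k + 2 \<le> n"
  shows "amult n (cc k s) u w l = (if l < n then u 0 * w l + (if l \<noteq> 0 then u l * w 0 else 0)
     + (if 2 \<le> l \<and> l \<le> k + 1 then u (l - 1) * w (sg s (l - 2) + 1) else 0) else 0)"
proof (cases "l < n")
  case False then show ?thesis by (simp add: amult_def)
next
  case True
  have e: "u i * w j * cc k s i j l = (if i = 0 \<and> j = l then u i * w j else 0) + (if j = 0 \<and> i = l \<and> i \<noteq> 0 then u i * w j else 0)
     + (if 1 \<le> i \<and> i \<le> k \<and> j = sg s (i - 1) + 1 \<and> l = i + 1 then u i * w j else 0)" for i j
    by (simp add: cc_def distrib_left)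
  have s1: "(\<Sum>i<n. \<Sum>j<n. (if i = 0 \<and> j = l then u i * w j else 0)) = u 0 * w l"
  proof -
    have "(\<Sum>i<n. \<Sum>j<n. (if i = 0 \<and> j = l then u i * w j else 0)) = (\<Sum>i<n. if i = 0 then u i * w l else 0)"
      by (rule sum.cong) (use True in \<open>auto simp: sum.delta' if_distrib cong: if_cong\<close>)
    also have "\<dots> = u 0 * w l" using kn by (simp add: sum.delta')
    finally show ?thesis .
  qed
  have s2: "(\<Sum>i<n. \<Sum>j<n. (if j = 0 \<and> i = l \<and> i \<noteq> 0 then u i * w j else 0)) = (if l \<noteq> 0 then u l * w 0 else 0)"
  proof -
    have "(\<Sum>i<n. \<Sum>j<n. (if j = 0 \<and> i = l \<and> i \<noteq> 0 then u i * w j else 0)) = (\<Sum>i<n. if i = l then (if l \<noteq> 0 then u i * w 0 else 0) else 0)"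
    proof (rule sum.cong)
      fix i assume "i \<in> {..<n}"
      show "(\<Sum>j<n. (if j = 0 \<and> i = l \<and> i \<noteq> 0 then u i * w j else 0)) = (if i = l then (if l \<noteq> 0 then u i * w 0 else 0) else 0)"
      proof -
        have eqf: "(\<lambda>j. if j = 0 \<and> i = l \<and> i \<noteq> 0 then u i * w j else 0) = (\<lambda>j. if j = 0 then (if i = l then (if l \<noteq> 0 then u i * w 0 else 0) else 0) else 0)"
          by auto
        then show ?thesis by (subst eqf) (use kn in \<open>simp add: sum.delta\<close>)
      qed
    qed simp
    also have "\<dots> = (if l \<noteq> 0 then u l * w 0 else 0)" using True by (simp add: sum.delta')
    finally show ?thesis .
  qed
  have s3: "(\<Sum>i<n. \<Sum>j<n. (if 1 \<le> i \<and> i \<le> k \<and> j = sg s (i - 1) + 1 \<and> l = i + 1 then u i * w j else 0))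
      = (if 2 \<le> l \<and> l \<le> k + 1 then u (l - 1) * w (sg s (l - 2) + 1) else 0)"
  proof -
    have "(\<Sum>i<n. \<Sum>j<n. (if 1 \<le> i \<and> i \<le> k \<and> j = sg s (i - 1) + 1 \<and> l = i + 1 then u i * w j else 0))
       = (\<Sum>i<n. if i = l - 1 \<and> 2 \<le> l \<and> l \<le> k + 1 then u i * w (sg s (i - 1) + 1) else 0)"
    proof (rule sum.cong)
      fix i assume "i \<in> {..<n}"
      have "sg s (i - 1) + 1 < n" if "i \<le> k" using that kn sg_le[of s "i - 1"] by linarith
      then show "(\<Sum>j<n. (if 1 \<le> i \<and> i \<le> k \<and> j = sg s (i - 1) + 1 \<and> l = i + 1 then u i * w j else 0))
          = (if i = l - 1 \<and> 2 \<le> l \<and> l \<le> k + 1 then u i * w (sg s (i - 1) + 1) else 0)"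
        by (cases "1 \<le> i \<and> i \<le> k \<and> l = i + 1") (auto simp: sum.delta')
    qed simp
    also have "\<dots> = (if 2 \<le> l \<and> l \<le> k + 1 then u (l - 1) * w (sg s (l - 2) + 1) else 0)"
      using True by (auto simp: sum.delta' diff_diff_add numeral_2_eq_2)
    finally show ?thesis .
  qed
  have "amult n (cc k s) u w l = (\<Sum>i<n. \<Sum>j<n. u i * w j * cc k s i j l)"
    using True by (simp add: amult_def)
  also have "\<dots> = (\<Sum>i<n. \<Sum>j<n. (if i = 0 \<and> j = l then u i * w j else 0))
     + (\<Sum>i<n. \<Sum>j<n. (if j = 0 \<and> i = l \<and> i \<noteq> 0 then u i * w j else 0))
     + (\<Sum>i<n. \<Sum>j<n. (if 1 \<le> i \<and> i \<le> k \<and> j = sg s (i - 1) + 1 \<and> l = i + 1 then u i * w j else 0))"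
    by (simp only: e sum.distrib)
  finally show ?thesis using True s1 s2 s3 by simp
qed



lemma bas_vecs: "r < n \<Longrightarrow> bas r \<in> vecs n"
  by (auto simp: bas_def vecs_def)

lemma unital_cc:
  assumes kn: "k + 2 \<le> n"
  shows "is_unital_alg n (cc k s :: nat \<Rightarrow> nat \<Rightarrow> nat \<Rightarrow> 'a::field) (bas 0)"
  unfolding is_unital_alg_def
proof (intro conjI ballI)
  show "(bas 0 :: nat \<Rightarrow> 'a) \<in> vecs n" using kn by (intro bas_vecs) simp
next
  fix x :: "nat \<Rightarrow> 'a" assume x: "x \<in> vecs n"
  show "amult n (cc k s) (bas 0) x = x"
  proof
    fix l show "amult n (cc k s) (bas 0) x l = x l"
      using x by (simp add: amult_cc[OF kn] bas_def vecs_def)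
  qed
  show "amult n (cc k s) x (bas 0) = x"
  proof
    fix l show "amult n (cc k s) x (bas 0) l = x l"
      using x by (simp add: amult_cc[OF kn] bas_def vecs_def)
  qed
qed

definition basep :: "nat \<Rightarrow> nat \<Rightarrow> (nat \<Rightarrow> nat) \<Rightarrow> (nat \<Rightarrow> 'a::field) set \<Rightarrow> bool" where
  "basep n k s S \<longleftrightarrow> (\<forall>v\<in>vecs n. \<exists>x\<in>Lspan n (cc k s) (bas 0) S 1.
      \<forall>r<n. (r \<le> 1 \<or> k + 2 \<le> r) \<longrightarrow> v r = x r)"

lemma upper:
  fixes S :: "(nat \<Rightarrow> 'a::field) set"
  assumes kn: "k + 2 \<le> n" and Sv: "S \<subseteq> vecs n" and base: "basep n k s S"
  shows "Lspan n (cc k s) (bas 0) S (ell s k) = vecs n"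
proof -
  let ?L = "Lspan n (cc k s) (bas 0) S"
  have e: "(bas 0 :: nat \<Rightarrow> 'a) \<in> vecs n" using kn by (intro bas_vecs) simp
  have P: "t \<le> k \<Longrightarrow> \<forall>v\<in>vecs n. \<exists>x\<in>?L (ell s t). \<forall>r<n. (r \<le> t + 1 \<or> k + 2 \<le> r) \<longrightarrow> v r = x r" for t
  proof (induction t rule: less_induct)
    case (less t)
    show ?case
    proof (cases t)
      case 0 then show ?thesis using base by (simp add: basep_def)
    next
      case (Suc u)
      have uk: "u < k" using less.prems Suc by simp
      have sgu: "sg s u \<le> u" by (rule sg_le)
      have IHu: "\<forall>v\<in>vecs n. \<exists>x\<in>?L (ell s u). \<forall>r<n. (r \<le> u + 1 \<or> k + 2 \<le> r) \<longrightarrow> v r = x r"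
        using less.IH[of u] Suc uk by simp
      have IHs: "\<forall>v\<in>vecs n. \<exists>x\<in>?L (ell s (sg s u)). \<forall>r<n. (r \<le> sg s u + 1 \<or> k + 2 \<le> r) \<longrightarrow> v r = x r"
        using less.IH[of "sg s u"] Suc uk sgu by simp
      obtain x' where x': "x' \<in> ?L (ell s u)" "\<forall>r<n. (r \<le> u + 1 \<or> k + 2 \<le> r) \<longrightarrow> bas (u + 1) r = x' r"
        using IHu bas_vecs[of "u + 1" n] uk kn by auto
      obtain x'' where x'': "x'' \<in> ?L (ell s (sg s u))" "\<forall>r<n. (r \<le> sg s u + 1 \<or> k + 2 \<le> r) \<longrightarrow> bas (sg s u + 1) r = x'' r"
        using IHs bas_vecs[of "sg s u + 1" n] uk sgu kn by auto
      define z where "z = amult n (cc k s) x' x''"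
      have zL: "z \<in> ?L (ell s (Suc u))"
        unfolding z_def using Lspan_mult[OF x'(1) x''(1)] by simp
      have x'0: "x' 0 = 0" using x'(2) kn by (auto simp: bas_def)
      have x''0: "x'' 0 = 0" using x''(2) kn by (auto simp: bas_def)
      have zc: "z r = bas (u + 2) r" if r: "r < n" "r \<le> u + 2 \<or> k + 2 \<le> r" for r
      proof -
        have zr: "z r = (if 2 \<le> r \<and> r \<le> k + 1 then x' (r - 1) * x'' (sg s (r - 2) + 1) else 0)"
          unfolding z_def using r x'0 x''0 by (simp add: amult_cc[OF kn])
        show ?thesis
        proof (cases "2 \<le> r \<and> r \<le> k + 1")
          case False then show ?thesis using zr uk by (auto simp: bas_def)
        next
          case True
          then have "r \<le> u + 2" using r by auto
          then have a: "x' (r - 1) = bas (u + 1) (r - 1)" using x'(2) r by auto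
          show ?thesis
          proof (cases "r = u + 2")
            case True
            have "sg s u + 1 < n" using sgu uk kn by linarith
            then have "x'' (sg s u + 1) = 1" using x''(2) by (auto simp: bas_def)
            then have "x'' (sg s (r - 2) + 1) = 1" using True by simp
            then show ?thesis using zr a True uk by (auto simp: bas_def)
          next
            case False
            then have "x' (r - 1) = 0" using a True by (auto simp: bas_def)
            then show ?thesis using zr False by (auto simp: bas_def)
          qed
        qed
      qed
      show ?thesis
      proof
        fix v :: "nat \<Rightarrow> 'a" assume v: "v \<in> vecs n"
        obtain x1 where x1: "x1 \<in> ?L (ell s u)" "\<forall>r<n. (r \<le> u + 1 \<or> k + 2 \<le> r) \<longrightarrow> v r = x1 r"
          using IHu v by auto
        define a where "a = v (u + 2) - x1 (u + 2)"
        define x where "x = (\<lambda>i. x1 i + a * z i)"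
        have "?L (ell s u) \<subseteq> ?L (ell s (Suc u))" by (rule Lspan_mono) simp
        then have "x1 \<in> ?L (ell s (Suc u))" using x1(1) by blast
        then have "x \<in> ?L (ell s (Suc u))" unfolding x_def Lspan_def
          using zL unfolding Lspan_def by (intro lin_span_add lin_span_scale)
        moreover have "\<forall>r<n. (r \<le> t + 1 \<or> k + 2 \<le> r) \<longrightarrow> v r = x r"
        proof (intro allI impI)
          fix r assume r: "r < n" "r \<le> t + 1 \<or> k + 2 \<le> r"
          then have zr: "z r = bas (u + 2) r" using zc Suc by auto
          show "v r = x r"
          proof (cases "r = u + 2")
            case True then show ?thesis using zr by (simp add: x_def a_def bas_def)
          next
            case False
            then have "r \<le> u + 1 \<or> k + 2 \<le> r" using r Suc by auto
            then have "v r = x1 r" using x1(2) r(1) by blast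
            then show ?thesis using zr False by (simp add: x_def bas_def)
          qed
        qed
        ultimately show "\<exists>x\<in>?L (ell s t). \<forall>r<n. (r \<le> t + 1 \<or> k + 2 \<le> r) \<longrightarrow> v r = x r"
          using Suc by blast
      qed
    qed
  qed
  show ?thesis
  proof
    show "?L (ell s k) \<subseteq> vecs n" using Lspan_vecs[OF e Sv] .
    show "vecs n \<subseteq> ?L (ell s k)"
    proof
      fix v :: "nat \<Rightarrow> 'a" assume v: "v \<in> vecs n"
      obtain x where x: "x \<in> ?L (ell s k)" "\<forall>r<n. (r \<le> k + 1 \<or> k + 2 \<le> r) \<longrightarrow> v r = x r"
        using P[of k] v by auto
      have "x \<in> vecs n" using x(1) Lspan_vecs[OF e Sv] by auto
      have "v i = x i" for i
      proof (cases "i < n")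
        case True then show ?thesis using x(2) by (cases "i \<le> k + 1") auto
      next
        case False then show ?thesis using v \<open>x \<in> vecs n\<close> by (simp add: vecs_def)
      qed
      then have "v = x" by auto
      then show "v \<in> ?L (ell s k)" using x(1) by simp
    qed
  qed
qed



lemma gen_base:
  fixes S :: "(nat \<Rightarrow> 'a::field) set"
  assumes kn: "k + 2 \<le> n" and g: "generating_set n (cc k s) (bas 0) S"
  shows "basep n k s S"
proof -
  let ?L = "Lspan n (cc k s) (bas 0) S"
  let ?Q = "\<lambda>x. \<exists>y\<in>?L 1. \<forall>r<n. (r \<le> 1 \<or> k + 2 \<le> r) \<longrightarrow> x r = y r"
  obtain m where m: "?L m = vecs n" using g unfolding generating_set_def by blast
  have W: "?Q w" if "(w, i) \<in> words n (cc k s) (bas 0) S" for w i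
    using that
  proof (induction rule: words.induct)
    case unit_word
    have "bas 0 \<in> ?L 1" by (rule word_Lspan[OF words.unit_word]) simp
    then show ?case by blast
  next
    case (gen_word s)
    have "s \<in> ?L 1" by (rule word_Lspan[OF words.gen_word[OF gen_word]]) simp
    then show ?case by blast
  next
    case (mult_word u i w j)
    obtain y1 where y1: "y1 \<in> ?L 1" "\<forall>r<n. (r \<le> 1 \<or> k + 2 \<le> r) \<longrightarrow> u r = y1 r" using mult_word by blast
    obtain y2 where y2: "y2 \<in> ?L 1" "\<forall>r<n. (r \<le> 1 \<or> k + 2 \<le> r) \<longrightarrow> w r = y2 r" using mult_word by blast
    have e1: "bas 0 \<in> ?L 1" by (rule word_Lspan[OF words.unit_word]) simp
    define y where "y = (\<lambda>r. u 0 * y2 r + w 0 * y1 r + (- (u 0 * w 0)) * bas 0 r)"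
    have "y \<in> ?L 1" unfolding y_def using y2(1) y1(1) e1 unfolding Lspan_def by (rule lin_span_lc3)
    moreover have "\<forall>r<n. (r \<le> 1 \<or> k + 2 \<le> r) \<longrightarrow> amult n (cc k s) u w r = y r"
    proof (intro allI impI)
      fix r assume r: "r < n" "r \<le> 1 \<or> k + 2 \<le> r"
      have "u r = y1 r" "w r = y2 r" using y1(2) y2(2) r by auto
      moreover have "u 0 = y1 0" "w 0 = y2 0" using y1(2) y2(2) r by auto
      ultimately show "amult n (cc k s) u w r = y r"
        using r by (auto simp: amult_cc[OF kn] y_def bas_def algebra_simps)
    qed
    ultimately show ?case by blast
  qed
  have "v \<in> {x. ?Q x}" if "v \<in> ?L m" for v
    using that[unfolded Lspan_def]
  proof (rule lin_span_min[where P = "\<lambda>x. x \<in> {x. ?Q x}", rotated 4])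
    show "(\<lambda>_. 0) \<in> {x. ?Q x}"
      using lin_span_zero unfolding Lspan_def by fastforce
    show "(\<lambda>k. x k + y k) \<in> {x. ?Q x}" if "x \<in> {x. ?Q x}" "y \<in> {x. ?Q x}" for x y
    proof -
      note hxy = that
      obtain x' where "x' \<in> ?L 1" "\<forall>r<n. (r \<le> 1 \<or> k + 2 \<le> r) \<longrightarrow> x r = x' r" using hxy by blast
      moreover obtain y' where "y' \<in> ?L 1" "\<forall>r<n. (r \<le> 1 \<or> k + 2 \<le> r) \<longrightarrow> y r = y' r" using hxy by blast
      ultimately show ?thesis unfolding Lspan_def
        by (intro CollectI bexI[of _ "\<lambda>k. x' k + y' k"]) (auto intro: lin_span_add)
    qed
    show "(\<lambda>k. a * x k) \<in> {x. ?Q x}" if "x \<in> {x. ?Q x}" for a x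
    proof -
      note hx = that
      obtain x' where "x' \<in> ?L 1" "\<forall>r<n. (r \<le> 1 \<or> k + 2 \<le> r) \<longrightarrow> x r = x' r" using hx by blast
      then show ?thesis unfolding Lspan_def
        by (intro CollectI bexI[of _ "\<lambda>k. a * x' k"]) (auto intro: lin_span_scale)
    qed
    show "w \<in> {x. ?Q x}" if "w \<in> {w. \<exists>k'\<le>m. (w, k') \<in> words n (cc k s) (bas 0) S}" for w
      using that W by blast
  qed
  then show ?thesis unfolding basep_def using m by blast
qed

definition S0 :: "nat \<Rightarrow> nat \<Rightarrow> (nat \<Rightarrow> 'a::field) set" where
  "S0 n k = bas ` ({1} \<union> {k + 2..<n})"

lemma S0_vecs: "k + 2 \<le> n \<Longrightarrow> S0 n k \<subseteq> vecs n"
proof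
  fix x assume kn: "k + 2 \<le> n" and "x \<in> S0 n k"
  then obtain r where "x = bas r" "r = 1 \<or> (k + 2 \<le> r \<and> r < n)" unfolding S0_def by auto
  moreover have "r < n" using calculation(2) kn by linarith
  ultimately show "x \<in> vecs n" using bas_vecs by blast
qed

lemma S0_base:
  assumes kn: "k + 2 \<le> n"
  shows "basep n k s (S0 n k :: (nat \<Rightarrow> 'a::field) set)"
  unfolding basep_def
proof (intro ballI)
  fix v :: "nat \<Rightarrow> 'a" assume v: "v \<in> vecs n"
  let ?L = "Lspan n (cc k s) (bas 0) (S0 n k :: (nat \<Rightarrow> 'a) set)"
  define R where "R = {0, 1} \<union> {k + 2..<n}"
  define x where "x = (\<lambda>i. \<Sum>r\<in>R. v r * bas r i)"
  have "x \<in> ?L 1" unfolding x_def Lspan_def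
  proof (rule lin_span_sum)
    show "finite R" unfolding R_def by simp
    fix r assume r: "r \<in> R"
    have "bas r \<in> {w. \<exists>k'\<le>1. (w, k') \<in> words n (cc k s) (bas 0) (S0 n k :: (nat \<Rightarrow> 'a) set)}"
    proof (cases "r = 0")
      case True then show ?thesis using words.unit_word by blast
    next
      case False
      then have "bas r \<in> S0 n k" using r unfolding R_def S0_def by auto
      then show ?thesis using words.gen_word by blast
    qed
    then show "bas r \<in> lin_span {w. \<exists>k'\<le>1. (w, k') \<in> words n (cc k s) (bas 0) (S0 n k :: (nat \<Rightarrow> 'a) set)}"
      by (rule lin_span_base)
  qed
  moreover have "\<forall>r<n. (r \<le> 1 \<or> k + 2 \<le> r) \<longrightarrow> v r = x r"
  proof (intro allI impI)
    fix r assume r: "r < n" "r \<le> 1 \<or> k + 2 \<le> r"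
    then have rR: "r \<in> R" unfolding R_def by auto
    have "x r = (\<Sum>q\<in>R. if q = r then v q else 0)" unfolding x_def bas_def
      by (rule sum.cong) auto
    also have "\<dots> = v r" using rR R_def by (simp add: sum.delta)
    finally show "v r = x r" by simp
  qed
  ultimately show "\<exists>x\<in>?L 1. \<forall>r<n. (r \<le> 1 \<or> k + 2 \<le> r) \<longrightarrow> v r = x r" by blast
qed

lemma S0_words:
  assumes kn: "k + 2 \<le> n"
    and w: "(w, i) \<in> words n (cc k s) (bas 0) (S0 n k :: (nat \<Rightarrow> 'a::field) set)"
  shows "\<forall>t\<le>k. i < ell s t \<longrightarrow> w (t + 1) = 0"
  using w
proof (induction rule: words.induct)
  case unit_word then show ?case by (simp add: bas_def)
next
  case (gen_word g)
  then obtain r where r: "g = bas r" "r = 1 \<or> k + 2 \<le> r" unfolding S0_def by auto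
  show ?case
  proof (intro allI impI)
    fix t assume t: "t \<le> k" "1 < ell s t"
    then have "t \<noteq> 0" by (cases t) auto
    then show "g (t + 1) = 0" using r t by (auto simp: bas_def)
  qed
next
  case (mult_word u i w j)
  show ?case
  proof (intro allI impI)
    fix t assume t: "t \<le> k" "i + j < ell s t"
    have tn: "t + 1 < n" using t kn by simp
    have a: "w (t + 1) = 0" using mult_word.IH(2) t by auto
    have b: "u (t + 1) = 0" using mult_word.IH(1) t by auto
    have c: "u t * w (sg s (t - 1) + 1) = 0" if t1: "1 \<le> t"
    proof -
      obtain t0 where t0: "t = Suc t0" using t1 by (cases t) auto
      have "ell s t = ell s t0 + ell s (sg s t0)" using t0 by simp
      then have "i < ell s t0 \<or> j < ell s (sg s t0)" using t by linarith
      moreover have "t0 \<le> k" "sg s t0 \<le> k" using t t0 sg_le[of s t0] by auto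
      ultimately have "u (t0 + 1) = 0 \<or> w (sg s t0 + 1) = 0" using mult_word.IH by blast
      then show ?thesis using t0 by auto
    qed
    show "amult n (cc k s) u w (t + 1) = 0"
      using tn a b c by (auto simp: amult_cc[OF kn])
  qed
qed

lemma S0_lower:
  assumes kn: "k + 2 \<le> n" and i: "i < ell s k"
  shows "Lspan n (cc k s) (bas 0) (S0 n k :: (nat \<Rightarrow> 'a::field) set) i \<noteq> vecs n"
proof
  assume eq: "Lspan n (cc k s) (bas 0) (S0 n k :: (nat \<Rightarrow> 'a::field) set) i = vecs n"
  have "x \<in> {x. x (k + 1) = 0}" if "x \<in> Lspan n (cc k s) (bas 0) (S0 n k :: (nat \<Rightarrow> 'a::field) set) i" for x
    using that unfolding Lspan_def
  proof (rule lin_span_min[where P = "\<lambda>x. x \<in> {x. x (k + 1) = 0}", rotated 4])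
    show "w \<in> {x. x (k + 1) = 0}" if "w \<in> {w. \<exists>k'\<le>i. (w, k') \<in> words n (cc k s) (bas 0) (S0 n k :: (nat \<Rightarrow> 'a) set)}" for w
      using that S0_words[OF kn] i by fastforce
  qed auto
  moreover have "(bas (k + 1) :: nat \<Rightarrow> 'a) \<in> vecs n" using kn by (intro bas_vecs) simp
  ultimately have "(bas (k + 1) :: nat \<Rightarrow> 'a) (k + 1) = 0" using eq by blast
  then show False by (simp add: bas_def)
qed

lemma alg_exists:
  assumes kn: "k + 2 \<le> n"
  shows "has_alg_of_dim_length TYPE('a::field) n (ell s k)"
proof -
  let ?c = "cc k s :: nat \<Rightarrow> nat \<Rightarrow> nat \<Rightarrow> 'a"
  let ?e = "bas 0 :: nat \<Rightarrow> 'a"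
  let ?S0 = "S0 n k :: (nat \<Rightarrow> 'a) set"
  have full0: "Lspan n ?c ?e ?S0 (ell s k) = vecs n"
    by (rule upper[OF kn S0_vecs[OF kn] S0_base[OF kn]])
  have gen0: "generating_set n ?c ?e ?S0"
    unfolding generating_set_def using S0_vecs[OF kn] full0 by (auto simp: S0_def)
  have len0: "set_length n ?c ?e ?S0 = ell s k"
    unfolding set_length_def
  proof (rule Least_equality)
    show "Lspan n ?c ?e ?S0 (ell s k) = vecs n" by (rule full0)
    show "ell s k \<le> y" if "Lspan n ?c ?e ?S0 y = vecs n" for y
      using S0_lower[OF kn, of y s] that by (cases "y < ell s k") auto
  qed
  have le: "set_length n ?c ?e S \<le> ell s k" if "generating_set n ?c ?e S" for S
  proof -
    have "Lspan n ?c ?e S (ell s k) = vecs n"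
      using that by (intro upper[OF kn] gen_base[OF kn]) (auto simp: generating_set_def)
    then show ?thesis unfolding set_length_def by (rule Least_le)
  qed
  have "alg_length n ?c ?e = ell s k"
    unfolding alg_length_def
  proof (rule Max_eqI)
    show "finite {set_length n ?c ?e S |S. generating_set n ?c ?e S}"
      by (rule finite_subset[of _ "{..ell s k}"]) (use le in auto)
    show "y \<le> ell s k" if "y \<in> {set_length n ?c ?e S |S. generating_set n ?c ?e S}" for y
      using that le by auto
    show "ell s k \<in> {set_length n ?c ?e S |S. generating_set n ?c ?e S}"
      using gen0 len0 by force
  qed
  then show ?thesis unfolding has_alg_of_dim_length_def using unital_cc[OF kn] by blast
qed


theorem proposition4p11:
  fixes n :: nat
  assumes "n \<ge> 6"
  shows "\<forall>j\<in>{1..2 ^ nat \<lceil>real n / 2\<rceil>}. has_alg_of_dim_length TYPE('a::field) n j"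
proof
  fix j :: nat assume j: "j \<in> {1..2 ^ nat \<lceil>real n / 2\<rceil>}"
  then have "ach j (n - 2)" using ach_all[OF assms] by auto
  then obtain s k where sk: "k \<le> n - 2" "ell s k = j" unfolding ach_def by blast
  have "k + 2 \<le> n" using sk(1) assms by linarith
  then have "has_alg_of_dim_length TYPE('a::field) n (ell s k)" by (rule alg_exists)
  then show "has_alg_of_dim_length TYPE('a::field) n j" using sk(2) by simp
qed

end
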